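(* Let $n\in\mathbb N$ and $t\in(0,\frac{1}{n+1})$. Then \[ R_{n,t}=\sum_{i=1}^{n+1}\left(1-\frac{2L_{n,i}}{t}\right)\mathbf 1\{L_{n,i}\le t\}, \] and in particular $|R_{n,t}|\le K_{n,t}$ almost surely.
   Context: Kakutani's interval-splitting process: let $U_1,U_2,\dots$ be i.i.d. uniform random variables on $[0,1]$. At time $0$ the partition of $[0,1]$ consists of the single interval $[0,1]$. Given the partition at time $n\in\mathbb Z_+$ (which consists of $n+1$ intervals, whose lengths are a.s. distinct), let $[a,b]$ be the interval of maximal length; the partition at time $n+1$ is obtained by replacing $[a,b]$ by the two intervals $[a,a+U_{n+1}(b-a)]$ and $[a+U_{n+1}(b-a),b]$. $L_{n,1},\dots,L_{n,n+1}$ are the interval lengths at time $n$, $M_n$ their maximum, $\mathcal F_n:=\sigma(U_1,\dots,U_n)$, $N_t:=\inf\{n\in\mathbb Z_+:M_n\le t\}$ for $t>0$, and $R_{n,t}:=\mathbb E(N_t\mid\mathcal F_n)-\mathbb E N_t$. $K_{n,t}:=\sum_{i=1}^{n+1}\mathbf 1\{0<L_{n,i}\le t\}$. *)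

theory Defs
  imports "HOL-Probability.Probability"
begin

text \<open>Kakutani's interval splitting, tracked through the list of interval lengths.
  The argument u is the driving sequence; u (Suc n) plays the role of U_{n+1}
  (u 0 is unused).\<close>

fun kak_lengths :: "(nat \<Rightarrow> real) \<Rightarrow> nat \<Rightarrow> real list" where
  "kak_lengths u 0 = [1]"
| "kak_lengths u (Suc n) =
     (let ls = kak_lengths u n; m = Max (set ls); i = (LEAST j. j < length ls \<and> ls ! j = m)
      in take i ls @ [u (Suc n) * m, (1 - u (Suc n)) * m] @ drop (Suc i) ls)"

definition kak_L :: "(nat \<Rightarrow> real) \<Rightarrow> nat \<Rightarrow> nat \<Rightarrow> real" where
  "kak_L u n i = kak_lengths u n ! (i - 1)"

definition kak_M :: "(nat \<Rightarrow> real) \<Rightarrow> nat \<Rightarrow> real" where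
  "kak_M u n = Max (set (kak_lengths u n))"

definition kak_N :: "(nat \<Rightarrow> real) \<Rightarrow> real \<Rightarrow> nat" where
  "kak_N u t = (LEAST n. kak_M u n \<le> t)"

definition kak_K :: "(nat \<Rightarrow> real) \<Rightarrow> nat \<Rightarrow> real \<Rightarrow> nat" where
  "kak_K u n t = card {i \<in> {1..n+1}. 0 < kak_L u n i \<and> kak_L u n i \<le> t}"

definition gen_filtr :: "'a measure \<Rightarrow> (nat \<Rightarrow> 'a \<Rightarrow> real) \<Rightarrow> nat \<Rightarrow> 'a measure" where
  "gen_filtr M U n = sigma (space M)
     {U i -` A \<inter> space M | i A. i \<in> {1..n} \<and> A \<in> sets borel}"

end

theory Submission
  imports Defs
begin

definition kf :: "real \<Rightarrow> real \<Rightarrow> real" where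
  "kf t x = (if t < x then 2 * x / t - 1 else 0)"

definition kidx :: "real list \<Rightarrow> nat" where
  "kidx ls = (LEAST j. j < length ls \<and> ls ! j = Max (set ls))"

lemma kidx: assumes "ls \<noteq> []"
  shows "kidx ls < length ls" "ls ! kidx ls = Max (set ls)"
proof -
  have "Max (set ls) \<in> set ls" using assms by simp
  then obtain j where "j < length ls" "ls ! j = Max (set ls)" by (metis in_set_conv_nth)
  then have "\<exists>j. j < length ls \<and> ls ! j = Max (set ls)" by blast
  from LeastI_ex[OF this] show "kidx ls < length ls" "ls ! kidx ls = Max (set ls)"
    unfolding kidx_def by auto
qed

lemma kl_Suc: "kak_lengths u (Suc n) =
   take (kidx (kak_lengths u n)) (kak_lengths u n) @
   [u (Suc n) * Max (set (kak_lengths u n)), (1 - u (Suc n)) * Max (set (kak_lengths u n))] @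
   drop (Suc (kidx (kak_lengths u n))) (kak_lengths u n)"
  by (simp add: kidx_def Let_def)

declare kak_lengths.simps(2)[simp del]

lemma kl_len: "length (kak_lengths u n) = Suc n"
proof (induction n)
  case 0 then show ?case by simp
next
  case (Suc n)
  have "kak_lengths u n \<noteq> []" using Suc by auto
  from kidx[OF this] Suc show ?case by (simp add: kl_Suc)
qed

lemma kl_ne: "kak_lengths u n \<noteq> []"
  using kl_len[of u n] by auto

lemma sum_list_replace:
  fixes g :: "'a \<Rightarrow> real"
  assumes "i < length ls"
  shows "sum_list (map g (take i ls @ [a, b] @ drop (Suc i) ls)) =
         sum_list (map g ls) - g (ls ! i) + g a + g b"
proof -
  have "ls = take i ls @ ls ! i # drop (Suc i) ls" using assms by (simp add: id_take_nth_drop)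
  then have "sum_list (map g ls) = sum_list (map g (take i ls)) + g (ls ! i) + sum_list (map g (drop (Suc i) ls))"
    by (metis (no_types, lifting) add.assoc list.simps(9) map_append sum_list.Cons sum_list_append)
  then show ?thesis by (simp add: algebra_simps)
qed

lemma set_replace: "set (take i ls @ [a, b] @ drop (Suc i) ls) \<subseteq> set ls \<union> {a, b}"
  using set_take_subset[of i ls] set_drop_subset[of "Suc i" ls] by auto

lemma kl_sum_g: fixes g :: "real \<Rightarrow> real" shows "sum_list (map g (kak_lengths u (Suc n))) =
   sum_list (map g (kak_lengths u n)) - g (kak_M u n) + g (u (Suc n) * kak_M u n) + g ((1 - u (Suc n)) * kak_M u n)"
  unfolding kl_Suc kak_M_def
  using sum_list_replace[OF kidx(1)[OF kl_ne], of g u n] kidx(2)[OF kl_ne, of u n] by simp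

definition unit_seq :: "(nat \<Rightarrow> real) \<Rightarrow> bool" where
  "unit_seq u \<longleftrightarrow> (\<forall>j. 0 \<le> u (Suc j) \<and> u (Suc j) \<le> 1)"

lemma kM_in: "kak_M u n \<in> set (kak_lengths u n)"
  unfolding kak_M_def using kl_ne by auto

lemma kM_ge: "x \<in> set (kak_lengths u n) \<Longrightarrow> x \<le> kak_M u n"
  unfolding kak_M_def by simp

lemma kl_nonneg: assumes "unit_seq u" shows "\<forall>x\<in>set (kak_lengths u n). 0 \<le> x"
proof (induction n)
  case 0 then show ?case by simp
next
  case (Suc n)
  have m: "0 \<le> kak_M u n" using Suc kM_in[of u n] by blast
  have "0 \<le> u (Suc n)" "u (Suc n) \<le> 1" using assms unfolding unit_seq_def by auto
  with m have ab: "0 \<le> u (Suc n) * kak_M u n" "0 \<le> (1 - u (Suc n)) * kak_M u n"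
    by auto
  have "set (kak_lengths u (Suc n)) \<subseteq> set (kak_lengths u n) \<union> {u (Suc n) * kak_M u n, (1 - u (Suc n)) * kak_M u n}"
    unfolding kl_Suc[of u n] kak_M_def by (rule set_replace)
  with Suc ab show ?case by auto
qed

lemma kl_sum: assumes "unit_seq u" shows "sum_list (kak_lengths u n) = 1"
proof (induction n)
  case 0 then show ?case by simp
next
  case (Suc n)
  show ?case using kl_sum_g[of "\<lambda>x. x" u n] Suc by (simp add: algebra_simps)
qed

lemma kl_Suc_set: "set (kak_lengths u (Suc n)) \<subseteq> set (kak_lengths u n) \<union> {u (Suc n) * kak_M u n, (1 - u (Suc n)) * kak_M u n}"
    unfolding kl_Suc[of u n] kak_M_def by (rule set_replace)

lemma kM_mono1: assumes "unit_seq u" shows "kak_M u (Suc n) \<le> kak_M u n"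
proof -
  have u: "0 \<le> u (Suc n)" "u (Suc n) \<le> 1" using assms unfolding unit_seq_def by auto
  moreover have m: "0 \<le> kak_M u n" using kl_nonneg[OF assms] kM_in by blast
  have ab: "u (Suc n) * kak_M u n \<le> kak_M u n" "(1 - u (Suc n)) * kak_M u n \<le> kak_M u n"
    using mult_right_mono[OF u(2) m] mult_right_mono[of "1 - u (Suc n)" 1, OF _ m] u by auto
  have "kak_M u (Suc n) \<in> set (kak_lengths u n) \<union> {u (Suc n) * kak_M u n, (1 - u (Suc n)) * kak_M u n}"
    using kl_Suc_set kM_in by blast
  then show ?thesis using ab kM_ge[of _ u n] by auto
qed

lemma kM_mono: assumes "unit_seq u" "j \<le> k" shows "kak_M u k \<le> kak_M u j"
  using assms(2)
proof (induction k)
  case 0 then show ?case by simp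
next
  case (Suc k)
  then show ?case using kM_mono1[OF assms(1), of k] by (cases "j = Suc k") auto
qed

lemma kM_le1: assumes "unit_seq u" shows "kak_M u n \<le> 1"
  using kM_mono[OF assms, of 0 n] by (simp add: kak_M_def)

lemma kM_nonneg: assumes "unit_seq u" shows "0 \<le> kak_M u n"
  using kl_nonneg[OF assms] kM_in by blast

lemma kM_lower: assumes "unit_seq u" shows "1 / real (Suc n) \<le> kak_M u n"
proof -
  have "sum_list (kak_lengths u n) \<le> sum_list (map (\<lambda>x. kak_M u n) (kak_lengths u n))"
    using sum_list_mono[of "kak_lengths u n" "\<lambda>x. x" "\<lambda>x. kak_M u n"] kM_ge by simp
  also have "\<dots> = real (Suc n) * kak_M u n" by (simp add: sum_list_triv kl_len)
  finally show ?thesis using kl_sum[OF assms]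
    by (simp add: field_simps)
qed

definition Sk :: "real \<Rightarrow> (nat \<Rightarrow> real) \<Rightarrow> nat \<Rightarrow> real" where
  "Sk t u k = sum_list (map (kf t) (kak_lengths u k))"
definition Ck :: "real \<Rightarrow> (nat \<Rightarrow> real) \<Rightarrow> nat \<Rightarrow> real" where
  "Ck t u k = (\<Sum>j<k. if t < kak_M u j then 1 else 0)"
definition Yk :: "real \<Rightarrow> (nat \<Rightarrow> real) \<Rightarrow> nat \<Rightarrow> real" where
  "Yk t u k = Ck t u k + Sk t u k"
definition psi :: "real \<Rightarrow> real \<Rightarrow> real \<Rightarrow> real" where
  "psi t m v = 1 + kf t (v * m) + kf t ((1 - v) * m) - kf t m"

lemma sum_list_cmult: "sum_list (map (\<lambda>x. c * x) xs) = (c::real) * sum_list xs"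
  by (induction xs) (auto simp: algebra_simps)

lemma sum_list_zero: "(\<forall>x\<in>set xs. f x = 0) \<Longrightarrow> sum_list (map f xs) = (0::real)"
  by (induction xs) auto

lemma sum_boole_card: "finite A \<Longrightarrow> (\<Sum>i\<in>A. if P i then 1 else (0::real)) = real (card {i\<in>A. P i})"
proof -
  assume "finite A"
  have "{i\<in>A. P i} = A \<inter> {i. P i}" by blast
  then show ?thesis using \<open>finite A\<close> by (simp add: sum.If_cases)
qed

lemma kf_nonneg: "0 < t \<Longrightarrow> 0 \<le> kf t x"
  unfolding kf_def by (auto simp: field_simps)

lemma kf_le: "0 < t \<Longrightarrow> 0 \<le> x \<Longrightarrow> kf t x \<le> 2 * x / t"
  unfolding kf_def by (auto simp: field_simps)

lemma kf_le1: assumes "0 < t" "x \<le> 1" shows "kf t x \<le> 2 / t"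
proof -
  have "2 * x / t \<le> 2 / t" using divide_right_mono[of "2*x" 2 t] assms by auto
  then show ?thesis unfolding kf_def using assms by auto
qed

lemma kf_small: "x \<le> t \<Longrightarrow> kf t x = 0"
  unfolding kf_def by auto

lemma Y_step:
  assumes "unit_seq u"
  shows "Yk t u (Suc k) - Yk t u k = (if t < kak_M u k then psi t (kak_M u k) (u (Suc k)) else 0)"
proof -
  have S: "Sk t u (Suc k) = Sk t u k - kf t (kak_M u k) + kf t (u (Suc k) * kak_M u k) + kf t ((1 - u (Suc k)) * kak_M u k)"
    unfolding Sk_def by (rule kl_sum_g)
  have C: "Ck t u (Suc k) = Ck t u k + (if t < kak_M u k then 1 else 0)"
    unfolding Ck_def by simp
  show ?thesis
  proof (cases "t < kak_M u k")
    case True then show ?thesis using S C unfolding Yk_def psi_def by simp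
  next
    case False
    have u: "0 \<le> u (Suc k)" "u (Suc k) \<le> 1" using assms unfolding unit_seq_def by auto
    have m: "0 \<le> kak_M u k" using kM_nonneg[OF assms] .
    have "u (Suc k) * kak_M u k \<le> kak_M u k" "(1 - u (Suc k)) * kak_M u k \<le> kak_M u k"
      using mult_right_mono[OF u(2) m] mult_right_mono[of "1 - u (Suc k)" 1, OF _ m] u by auto
    then have "kf t (u (Suc k) * kak_M u k) = 0" "kf t ((1 - u (Suc k)) * kak_M u k) = 0" "kf t (kak_M u k) = 0"
      using False by (auto intro!: kf_small)
    then show ?thesis using S C False unfolding Yk_def by simp
  qed
qed

lemma Sk_nonneg: "0 < t \<Longrightarrow> 0 \<le> Sk t u k"
  unfolding Sk_def by (induction "kak_lengths u k") (auto intro!: sum_list_nonneg kf_nonneg)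

lemma Sk_le: assumes "unit_seq u" "0 < t" shows "Sk t u k \<le> 2 / t"
proof -
  have "Sk t u k \<le> sum_list (map (\<lambda>x. 2 / t * x) (kak_lengths u k))"
    unfolding Sk_def using kl_nonneg[OF assms(1)] kf_le[OF assms(2)]
    by (intro sum_list_mono) auto
  also have "\<dots> = 2 / t * sum_list (kak_lengths u k)"
    by (rule sum_list_cmult)
  also have "\<dots> = 2 / t" using kl_sum[OF assms(1)] by simp
  finally show ?thesis .
qed

lemma Sk_zero: assumes "kak_M u k \<le> t" shows "Sk t u k = 0"
proof -
  have "\<forall>x\<in>set (kak_lengths u k). kf t x = 0"
    using kM_ge[of _ u k] assms by (auto intro!: kf_small order_trans[OF _ assms])
  then show ?thesis unfolding Sk_def by (rule sum_list_zero)
qed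

lemma Ck_nonneg: "0 \<le> Ck t u k"
  unfolding Ck_def by (auto intro!: sum_nonneg)

lemma Ck_le: "Ck t u k \<le> real k"
proof -
  have "Ck t u k \<le> (\<Sum>j<k. 1)" unfolding Ck_def by (intro sum_mono) auto
  then show ?thesis by simp
qed

lemma Yk_bound: assumes "unit_seq u" "0 < t" shows "0 \<le> Yk t u k" "Yk t u k \<le> real k + 2 / t"
  using Ck_nonneg[of t u k] Ck_le[of t u k] Sk_nonneg[OF assms(2), of u k] Sk_le[OF assms, of k]
  unfolding Yk_def by auto

lemma sum_list_nth1: "sum_list (map h ls) = (\<Sum>i = 1..length ls. h (ls ! (i - 1)))"
proof -
  have "sum_list (map h ls) = (\<Sum>i = 0..<length ls. h (ls ! i))"
    by (simp add: sum_list_sum_nth)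
  also have "\<dots> = (\<Sum>i = 1..length ls. h (ls ! (i - 1)))"
    by (simp add: sum.atLeast1_atMost_eq atLeast0LessThan)
  finally show ?thesis .
qed

lemma Ck_full: assumes "unit_seq u" "t < 1 / real (Suc n)" shows "Ck t u n = real n"
proof -
  have "t < kak_M u j" if "j < n" for j
  proof -
    have "1 / real (Suc n) \<le> 1 / real (Suc j)" using that by (simp add: frac_le)
    then show ?thesis using kM_lower[OF assms(1), of j] assms(2) by linarith
  qed
  then show ?thesis unfolding Ck_def by simp
qed

lemma final_formula:
  assumes "unit_seq u" "0 < t" "t < 1 / real (Suc n)"
  shows "Yk t u n - (2 / t - 1) = (\<Sum>i = 1..n+1. (1 - 2 * kak_L u n i / t) * (if kak_L u n i \<le> t then 1 else 0))"
proof -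
  have kf_eq: "kf t x = (2 * x / t - 1) + (1 - 2 * x / t) * (if x \<le> t then 1 else 0)" for x
    unfolding kf_def by auto
  have "Sk t u n = sum_list (map (\<lambda>x. (2 / t) * x - 1 + (1 - 2 * x / t) * (if x \<le> t then 1 else 0)) (kak_lengths u n))"
  proof -
    have "kf t = (\<lambda>x. (2 / t) * x - 1 + (1 - 2 * x / t) * (if x \<le> t then 1 else 0))"
      by (rule ext) (simp add: kf_eq)
    then show ?thesis unfolding Sk_def by simp
  qed
  also have "\<dots> = sum_list (map (\<lambda>x. (2 / t) * x) (kak_lengths u n)) - sum_list (map (\<lambda>x. 1) (kak_lengths u n))
     + sum_list (map (\<lambda>x. (1 - 2 * x / t) * (if x \<le> t then 1 else 0)) (kak_lengths u n))"
    by (simp add: sum_list_addf sum_list_subtractf)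
  also have "\<dots> = 2 / t - real (Suc n) + (\<Sum>i = 1..n+1. (1 - 2 * kak_L u n i / t) * (if kak_L u n i \<le> t then 1 else 0))"
    using kl_sum[OF assms(1), of n] kl_len[of u n]
  proof -
    have "sum_list (map (\<lambda>x. (2 / t) * x) (kak_lengths u n)) = 2 / t * sum_list (kak_lengths u n)"
      by (rule sum_list_cmult)
    then show ?thesis
    using kl_sum[OF assms(1), of n] kl_len[of u n]
    by (simp add: sum_list_triv sum_list_nth1[of _ "kak_lengths u n"] kak_L_def)
  qed
  finally show ?thesis unfolding Yk_def using Ck_full[OF assms(1,3)] by simp
qed

lemma kl_pos: assumes "\<And>j. 0 < u (Suc j) \<and> u (Suc j) < 1"
  shows "\<forall>x\<in>set (kak_lengths u n). 0 < x"
proof (induction n)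
  case 0 then show ?case by simp
next
  case (Suc n)
  have m: "0 < kak_M u n" using Suc kM_in[of u n] by blast
  have "0 < u (Suc n)" "u (Suc n) < 1" using assms by auto
  with m have ab: "0 < u (Suc n) * kak_M u n" "0 < (1 - u (Suc n)) * kak_M u n"
    by auto
  with Suc ab kl_Suc_set[of u n] show ?case by auto
qed

lemma K_bound:
  assumes "\<And>j. 0 < u (Suc j) \<and> u (Suc j) < 1"
  shows "\<bar>\<Sum>i = 1..n+1. (1 - 2 * kak_L u n i / t) * (if kak_L u n i \<le> t then 1 else 0)\<bar> \<le> real (kak_K u n t)"
proof -
  have pos: "0 < kak_L u n i" if "i \<in> {1..n+1}" for i
  proof -
    have "i - 1 < length (kak_lengths u n)" using that kl_len[of u n] by auto
    then show ?thesis using kl_pos[of u n] assms unfolding kak_L_def by (meson nth_mem)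
  qed
  have "\<bar>\<Sum>i = 1..n+1. (1 - 2 * kak_L u n i / t) * (if kak_L u n i \<le> t then 1 else 0)\<bar>
     \<le> (\<Sum>i = 1..n+1. \<bar>(1 - 2 * kak_L u n i / t) * (if kak_L u n i \<le> t then 1 else 0)\<bar>)"
    by (rule sum_abs)
  also have "\<dots> \<le> (\<Sum>i = 1..n+1. (if 0 < kak_L u n i \<and> kak_L u n i \<le> t then 1 else 0))"
  proof (rule sum_mono)
    fix i assume i: "i \<in> {1..n+1}"
    show "\<bar>(1 - 2 * kak_L u n i / t) * (if kak_L u n i \<le> t then 1 else 0)\<bar> \<le> (if 0 < kak_L u n i \<and> kak_L u n i \<le> t then 1 else 0)"
      using pos[OF i] by (auto simp: field_simps abs_le_iff)
  qed
  also have "\<dots> = real (kak_K u n t)"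
    unfolding kak_K_def by (rule sum_boole_card) simp
  finally show ?thesis .
qed

lemma kl_cong: assumes "\<And>j. u (Suc j) = u' (Suc j)" shows "kak_lengths u n = kak_lengths u' n"
  by (induction n) (auto simp: kl_Suc assms)

definition kfin :: "(nat \<Rightarrow> real) \<Rightarrow> real \<Rightarrow> bool" where
  "kfin u t \<longleftrightarrow> (\<exists>k. kak_M u k \<le> t)"

lemma kN_iff: assumes "unit_seq u" "kfin u t"
  shows "kak_M u k \<le> t \<longleftrightarrow> kak_N u t \<le> k"
proof
  assume "kak_M u k \<le> t" then show "kak_N u t \<le> k" unfolding kak_N_def by (rule Least_le)
next
  assume "kak_N u t \<le> k"
  have "kak_M u (kak_N u t) \<le> t" using assms(2) unfolding kak_N_def kfin_def by (rule LeastI_ex)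
  then show "kak_M u k \<le> t" using kM_mono[OF assms(1) \<open>kak_N u t \<le> k\<close>] by linarith
qed

lemma Ck_fin: assumes "unit_seq u" "kfin u t"
  shows "Ck t u k = real (min k (kak_N u t))"
proof -
  have "Ck t u k = (\<Sum>j<k. if j < kak_N u t then 1 else 0)"
    unfolding Ck_def
  proof (intro sum.cong refl)
    fix x
    have "t < kak_M u x \<longleftrightarrow> x < kak_N u t" using kN_iff[OF assms, of x] by linarith
    then show "(if t < kak_M u x then 1 else 0) = (if x < kak_N u t then 1 else (0::real))" by simp
  qed
  also have "\<dots> = real (card {j\<in>{..<k}. j < kak_N u t})"
    by (rule sum_boole_card) simp
  also have "{j\<in>{..<k}. j < kak_N u t} = {..<min k (kak_N u t)}" by auto
  finally show ?thesis by simp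
qed

lemma Sk_fin: assumes "unit_seq u" "kfin u t" "kak_N u t \<le> k" shows "Sk t u k = 0"
  using kN_iff[OF assms(1,2)] assms(3) by (intro Sk_zero) auto

lemma Ck_nfin: assumes "\<not> kfin u t" shows "Ck t u k = real k"
  using assms unfolding Ck_def kfin_def by (simp add: not_le)

lemma kf_meas[measurable]: "kf t \<in> borel_measurable borel"
  unfolding kf_def by measurable

lemma int1:
  assumes "0 < t" "t < m"
  shows "integrable lborel (\<lambda>v. kf t (v * m) * indicator {0..1} v)"
    "(LBINT v. kf t (v * m) * indicator {0..1} v) = m / t - 1"
proof -
  have m: "0 < m" using assms by simp
  have ae: "AE v in lborel. kf t (v * m) * indicator {0..1} v = (2 * m * v / t - 1) * indicator {t/m..1} v"
    using AE_lborel_singleton[of "t/m"]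
  proof eventually_elim
    case (elim v)
    show ?case
    proof (cases "t / m < v \<and> v \<le> 1")
      case True
      have "0 < t / m" using m assms by simp
      then have "0 \<le> v" "t / m \<le> v" using True by auto
      moreover have "t < v * m" using True m by (simp add: field_simps)
      ultimately have "t < v * m" "0 \<le> v" "t / m \<le> v" by auto
      then show ?thesis using True unfolding kf_def by (simp add: indicator_def algebra_simps)
    next
      case False
      then consider "1 < v" | "v < t / m" using elim by force
      then show ?thesis
      proof cases
        case 1 then show ?thesis by (simp add: indicator_def)
      next
        case 2 then have "v * m < t" using m by (simp add: field_simps)
        then show ?thesis using 2 unfolding kf_def by (simp add: indicator_def)
      qed
    qed
  qed
  have int: "integrable lborel (\<lambda>v. (2 * m * v / t - 1) * indicator {t/m..1} v)"
    by (rule borel_integrable_atLeastAtMost) (use assms in \<open>auto intro!: continuous_intros\<close>)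
  have "integrable lborel (\<lambda>v. kf t (v * m) * indicator {0..1} v) \<longleftrightarrow> integrable lborel (\<lambda>v. (2 * m * v / t - 1) * indicator {t/m..1} v)"
    apply (rule integrable_cong_AE)
    apply measurable
    apply (rule ae)
    done
  then show "integrable lborel (\<lambda>v. kf t (v * m) * indicator {0..1} v)" using int by simp
  have "(LBINT v. kf t (v * m) * indicator {0..1} v) = (LBINT v. (2 * m * v / t - 1) * indicator {t/m..1} v)"
    by (rule integral_cong_AE) (use ae assms in \<open>auto simp: kf_def\<close>)
  also have "\<dots> = (m * 1^2 / t - 1) - (m * (t/m)^2 / t - t/m)"
  proof (rule integral_FTC_Icc_real)
    show "t / m \<le> 1" using assms by simp
    fix x show "((\<lambda>x. m * x^2 / t - x) has_real_derivative (2 * m * x / t - 1)) (at x)"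
      using assms by (auto intro!: derivative_eq_intros simp: field_simps)
    show "isCont (\<lambda>x. 2 * m * x / t - 1) x" using assms by (auto intro!: continuous_intros)
  qed
  also have "\<dots> = m / t - 1" using m assms by (simp add: field_simps power2_eq_square)
  finally show "(LBINT v. kf t (v * m) * indicator {0..1} v) = m / t - 1" .
qed

lemma int2:
  assumes "0 < t" "t < m"
  shows "integrable lborel (\<lambda>v. kf t ((1 - v) * m) * indicator {0..1} v)"
    "(LBINT v. kf t ((1 - v) * m) * indicator {0..1} v) = m / t - 1"
proof -
  have m: "0 < m" using assms by simp
  have ae: "AE v in lborel. kf t ((1 - v) * m) * indicator {0..1} v = (2 * m * (1 - v) / t - 1) * indicator {0..1-t/m} v"
    using AE_lborel_singleton[of "1 - t/m"]
  proof eventually_elim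
    case (elim v)
    show ?case
    proof (cases "0 \<le> v \<and> v < 1 - t / m")
      case True
      have "0 < t / m" using m assms by simp
      then have "v \<le> 1" "v \<le> 1 - t / m" using True by auto
      moreover have "t < (1 - v) * m" using True m by (simp add: field_simps)
      ultimately have "t < (1 - v) * m" "v \<le> 1" "v \<le> 1 - t / m" by auto
      then show ?thesis using True unfolding kf_def by (simp add: indicator_def algebra_simps)
    next
      case False
      then consider "v < 0" | "1 - t / m < v" using elim by force
      then show ?thesis
      proof cases
        case 1 then show ?thesis by (simp add: indicator_def)
      next
        case 2 then have "(1 - v) * m < t" using m by (simp add: field_simps)
        then show ?thesis using 2 unfolding kf_def by (simp add: indicator_def)
      qed
    qed
  qed
  have int: "integrable lborel (\<lambda>v. (2 * m * (1 - v) / t - 1) * indicator {0..1-t/m} v)"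
    by (rule borel_integrable_atLeastAtMost) (use assms in \<open>auto intro!: continuous_intros\<close>)
  have "integrable lborel (\<lambda>v. kf t ((1 - v) * m) * indicator {0..1} v) \<longleftrightarrow> integrable lborel (\<lambda>v. (2 * m * (1 - v) / t - 1) * indicator {0..1-t/m} v)"
    apply (rule integrable_cong_AE)
    apply measurable
    apply (rule ae)
    done
  then show "integrable lborel (\<lambda>v. kf t ((1 - v) * m) * indicator {0..1} v)" using int by simp
  have "(LBINT v. kf t ((1 - v) * m) * indicator {0..1} v) = (LBINT v. (2 * m * (1 - v) / t - 1) * indicator {0..1-t/m} v)"
    by (rule integral_cong_AE) (use ae assms in \<open>auto simp: kf_def\<close>)
  also have "\<dots> = (2 * m / t * ((1 - t/m) - (1 - t/m)^2 / 2) - (1 - t/m)) - (2 * m / t * (0 - 0^2/2) - 0)"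
  proof (rule integral_FTC_Icc_real)
    show "0 \<le> 1 - t / m" using assms by simp
    fix x show "((\<lambda>x. 2 * m / t * (x - x^2 / 2) - x) has_real_derivative (2 * m * (1 - x) / t - 1)) (at x)"
      using assms by (auto intro!: derivative_eq_intros simp: field_simps)
    show "isCont (\<lambda>x. 2 * m * (1 - x) / t - 1) x" using assms by (auto intro!: continuous_intros)
  qed
  also have "\<dots> = m / t - 1" using m assms by (simp add: field_simps power2_eq_square)
  finally show "(LBINT v. kf t ((1 - v) * m) * indicator {0..1} v) = m / t - 1" .
qed

lemma psi_int:
  assumes "0 < t" "t < m"
  shows "integrable lborel (\<lambda>v. psi t m v * indicator {0..1} v)"
    "(LBINT v. psi t m v * indicator {0..1} v) = 0"
proof -
  have eq: "(\<lambda>v. psi t m v * indicator {0..1} v) = (\<lambda>v. (indicator {0..1} v + kf t (v * m) * indicator {0..1} v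
      + kf t ((1 - v) * m) * indicator {0..1} v) - kf t m * indicator {0..1} v)"
    by (auto simp: psi_def fun_eq_iff algebra_simps split: split_indicator)
  have i0: "integrable lborel (indicat_real {0..1::real})"
    by (simp add: integrable_indicator_iff)
  have i0': "integrable lborel (\<lambda>v. kf t m * indicat_real {0..1::real} v)"
    using i0 by simp
  note i1 = int1[OF assms] and i2 = int2[OF assms]
  show "integrable lborel (\<lambda>v. psi t m v * indicator {0..1} v)"
    unfolding eq using i0 i0' i1(1) i2(1) by (intro Bochner_Integration.integrable_diff Bochner_Integration.integrable_add) auto
  have "(LBINT v. psi t m v * indicator {0..1} v) = 1 + (m / t - 1) + (m / t - 1) - kf t m * 1"
    unfolding eq using i0 i0' i1 i2 by (simp add: Bochner_Integration.integral_diff Bochner_Integration.integral_add Bochner_Integration.integrable_add)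
  also have "\<dots> = 0" unfolding kf_def using assms by simp
  finally show "(LBINT v. psi t m v * indicator {0..1} v) = 0" .
qed

lemma nth_replace:
  assumes "i < length ls" "p \<le> length ls"
  shows "(take i ls @ [a, b] @ drop (Suc i) ls) ! p =
    (if p < i then ls ! (min p (length ls - 1)) else if p = i then a else if p = Suc i then b else ls ! (p - 1))"
  using assms by (auto simp: nth_append min_def intro!: arg_cong[where f="(!) ls"])

lemma kl_Suc_nth:
  assumes "p \<le> Suc n"
  shows "kak_lengths u (Suc n) ! p =
    (if p < kidx (kak_lengths u n) then kak_lengths u n ! (min p n)
     else if p = kidx (kak_lengths u n) then u (Suc n) * kak_M u n
     else if p = Suc (kidx (kak_lengths u n)) then (1 - u (Suc n)) * kak_M u n
     else kak_lengths u n ! (p - 1))"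
  unfolding kl_Suc kak_M_def using kl_len[of u n] assms kidx(1)[OF kl_ne, of u n]
  by (subst nth_replace) auto

lemma kM_as_Max: "kak_M u n = Max ((\<lambda>i. kak_lengths u n ! i) ` {..n})"
proof -
  have "set (kak_lengths u n) = (\<lambda>i. kak_lengths u n ! i) ` {..<Suc n}"
    by (metis map_nth set_map set_upt kl_len atLeast0LessThan)
  then show ?thesis unfolding kak_M_def by (simp add: lessThan_Suc_atMost)
qed

lemma kidx_as_Least: "kidx (kak_lengths u n) = (LEAST j. j < Suc n \<and> kak_lengths u n ! j = kak_M u n)"
  unfolding kidx_def kak_M_def kl_len ..

lemma kl_meas:
  fixes u :: "'a \<Rightarrow> nat \<Rightarrow> real"
  assumes "\<And>j. j < n \<Longrightarrow> (\<lambda>\<omega>. u \<omega> (Suc j)) \<in> borel_measurable N"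
  shows "\<forall>p\<le>n. (\<lambda>\<omega>. kak_lengths (u \<omega>) n ! p) \<in> borel_measurable N"
  using assms
proof (induction n)
  case 0 then show ?case by simp
next
  case (Suc n)
  have IH: "\<And>p. p \<le> n \<Longrightarrow> (\<lambda>\<omega>. kak_lengths (u \<omega>) n ! p) \<in> borel_measurable N"
    using Suc by auto
  have M: "(\<lambda>\<omega>. kak_M (u \<omega>) n) \<in> borel_measurable N"
    unfolding kM_as_Max by (rule borel_measurable_Max) (auto intro: IH)
  have P: "(\<lambda>\<omega>. j < Suc n \<and> kak_lengths (u \<omega>) n ! j = kak_M (u \<omega>) n) \<in> measurable N (count_space UNIV)" for j
  proof (cases "j < Suc n")
    case True
    with IH[of j] M show ?thesis by measurable
  next
    case False then show ?thesis by simp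
  qed
  have I: "(\<lambda>\<omega>. kidx (kak_lengths (u \<omega>) n)) \<in> measurable N (count_space UNIV)"
    unfolding kidx_as_Least by (rule measurable_Least) (rule P)
  have U: "(\<lambda>\<omega>. u \<omega> (Suc n)) \<in> borel_measurable N" using Suc.prems by auto
  show ?case
  proof (intro allI impI)
    fix p assume p: "p \<le> Suc n"
    have m1: "(\<lambda>\<omega>. kak_lengths (u \<omega>) n ! (min p n)) \<in> borel_measurable N" by (rule IH) simp
    have m2: "(\<lambda>\<omega>. kak_lengths (u \<omega>) n ! (p - 1)) \<in> borel_measurable N" by (rule IH) (use p in simp)
    show "(\<lambda>\<omega>. kak_lengths (u \<omega>) (Suc n) ! p) \<in> borel_measurable N"
      unfolding kl_Suc_nth[OF p] using I m1 m2 M U by measurable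
  qed
qed

lemma kM_meas:
  fixes u :: "'a \<Rightarrow> nat \<Rightarrow> real"
  assumes "\<And>j. j < n \<Longrightarrow> (\<lambda>\<omega>. u \<omega> (Suc j)) \<in> borel_measurable N"
  shows "(\<lambda>\<omega>. kak_M (u \<omega>) n) \<in> borel_measurable N"
proof -
  have "\<forall>p\<le>n. (\<lambda>\<omega>. kak_lengths (u \<omega>) n ! p) \<in> borel_measurable N" by (rule kl_meas) (rule assms)
  then show ?thesis unfolding kM_as_Max by (intro borel_measurable_Max) auto
qed

lemma Sk_meas:
  fixes u :: "'a \<Rightarrow> nat \<Rightarrow> real"
  assumes "\<And>j. j < n \<Longrightarrow> (\<lambda>\<omega>. u \<omega> (Suc j)) \<in> borel_measurable N"
  shows "(\<lambda>\<omega>. Sk t (u \<omega>) n) \<in> borel_measurable N"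
proof -
  have "Sk t (u \<omega>) n = (\<Sum>i\<in>{..n}. kf t (kak_lengths (u \<omega>) n ! i))" for \<omega>
    unfolding Sk_def sum_list_sum_nth using kl_len[of "u \<omega>" n]
    by (simp add: atLeast0LessThan lessThan_Suc_atMost)
  moreover have "\<forall>p\<le>n. (\<lambda>\<omega>. kak_lengths (u \<omega>) n ! p) \<in> borel_measurable N" by (rule kl_meas) (rule assms)
  ultimately show ?thesis by (simp; intro borel_measurable_sum measurable_compose[OF _ kf_meas]) auto
qed

lemma Ck_meas:
  fixes u :: "'a \<Rightarrow> nat \<Rightarrow> real"
  assumes "\<And>j. j < n \<Longrightarrow> (\<lambda>\<omega>. u \<omega> (Suc j)) \<in> borel_measurable N"
  shows "(\<lambda>\<omega>. Ck t (u \<omega>) n) \<in> borel_measurable N"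
proof -
  have KM: "(\<lambda>\<omega>. kak_M (u \<omega>) j) \<in> borel_measurable N" if "j < n" for j
    by (rule kM_meas) (use assms that in auto)
  then show ?thesis unfolding Ck_def
  proof (intro borel_measurable_sum)
    fix j assume "j \<in> {..<n}"
    then have [measurable]: "(\<lambda>\<omega>. kak_M (u \<omega>) j) \<in> borel_measurable N" using KM by simp
    show "(\<lambda>\<omega>. if t < kak_M (u \<omega>) j then 1 else 0 :: real) \<in> borel_measurable N" by measurable
  qed
qed

lemma Yk_meas:
  fixes u :: "'a \<Rightarrow> nat \<Rightarrow> real"
  assumes "\<And>j. j < n \<Longrightarrow> (\<lambda>\<omega>. u \<omega> (Suc j)) \<in> borel_measurable N"
  shows "(\<lambda>\<omega>. Yk t (u \<omega>) n) \<in> borel_measurable N"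
proof -
  have "(\<lambda>\<omega>. Ck t (u \<omega>) n) \<in> borel_measurable N" by (rule Ck_meas) (rule assms)
  moreover have "(\<lambda>\<omega>. Sk t (u \<omega>) n) \<in> borel_measurable N" by (rule Sk_meas) (rule assms)
  ultimately show ?thesis unfolding Yk_def by measurable
qed

lemma unif_int:
  fixes h :: "real \<Rightarrow> real"
  assumes [measurable]: "h \<in> borel_measurable borel"
  shows "integral\<^sup>L (uniform_measure lborel {0..1}) h = (LBINT v. h v * indicator {0..1} v)"
proof -
  have "uniform_measure lborel {0..1::real} = density lborel (\<lambda>x. ennreal (indicator {0..1} x))"
    unfolding uniform_measure_def by (intro density_cong) (auto simp: indicator_def)
  then have "integral\<^sup>L (uniform_measure lborel {0..1}) h = (LBINT v. indicator {0..1} v *\<^sub>R h v)"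
    by (simp add: integral_density)
  then show ?thesis by (simp add: mult.commute)
qed

lemma freeze:
  fixes W V :: "'a \<Rightarrow> real" and g :: "real \<times> real \<Rightarrow> real"
  assumes P: "prob_space M" and ind: "prob_space.indep_var M borel W borel V"
    and dV: "distr M borel V = uniform_measure lborel {0..1::real}"
    and g[measurable]: "g \<in> borel_measurable (borel \<Otimes>\<^sub>M borel)" and gb: "\<And>x v. \<bar>g (x, v)\<bar> \<le> B"
    and g0: "\<And>x. (LBINT v. g (x, v) * indicator {0..1} v) = 0"
  shows "(\<integral>\<omega>. g (W \<omega>, V \<omega>) \<partial>M) = 0"
proof -
  interpret prob_space M by (rule P)
  have rv: "random_variable borel W" "random_variable borel V"
    and joint: "distr M borel W \<Otimes>\<^sub>M distr M borel V = distr M (borel \<Otimes>\<^sub>M borel) (\<lambda>x. (W x, V x))"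
    using ind unfolding indep_var_distribution_eq by auto
  interpret PW: prob_space "distr M borel W" using rv by (intro prob_space_distr) auto
  interpret PV: prob_space "distr M borel V" using rv by (intro prob_space_distr) auto
  interpret PP: pair_prob_space "distr M borel W" "distr M borel V" ..
  have meas: "(\<lambda>x. (W x, V x)) \<in> measurable M (borel \<Otimes>\<^sub>M borel)" using rv by measurable
  have "(\<integral>\<omega>. g (W \<omega>, V \<omega>) \<partial>M) = integral\<^sup>L (distr M (borel \<Otimes>\<^sub>M borel) (\<lambda>x. (W x, V x))) g"
    using meas by (subst integral_distr) auto
  also have "\<dots> = integral\<^sup>L (distr M borel W \<Otimes>\<^sub>M distr M borel V) g"
    using joint by simp
  also have "\<dots> = (\<integral>x. (\<integral>v. g (x, v) \<partial>distr M borel V) \<partial>distr M borel W)"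
  proof (rule PP.integral_fst'[symmetric])
    have "prob_space (distr M borel W \<Otimes>\<^sub>M distr M borel V)"
      by (rule prob_space_pair) unfold_locales
    then have FM: "finite_measure (distr M borel W \<Otimes>\<^sub>M distr M borel V)"
      by (simp add: prob_space_def)
    show "integrable (distr M borel W \<Otimes>\<^sub>M distr M borel V) g"
      by (rule finite_measure.integrable_const_bound[OF FM, where B=B]) (auto simp: gb)
  qed
  also have "\<dots> = (\<integral>x. 0 \<partial>distr M borel W)"
  proof (rule Bochner_Integration.integral_cong[OF refl])
    fix x
    have "(\<integral>v. g (x, v) \<partial>distr M borel V) = integral\<^sup>L (uniform_measure lborel {0..1}) (\<lambda>v. g (x, v))"
      by (simp add: dV)
    also have "\<dots> = 0" by (subst unif_int) (auto simp: g0)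
    finally show "(\<integral>v. g (x, v) \<partial>distr M borel V) = 0" .
  qed
  finally show ?thesis by simp
qed

definition cl :: "real \<Rightarrow> real" where "cl v = max 0 (min 1 v)"

lemma cl_meas[measurable]: "cl \<in> borel_measurable borel"
  unfolding cl_def by measurable

locale kak = prob_space M for M :: "'a measure" +
  fixes U :: "nat \<Rightarrow> 'a \<Rightarrow> real" and t :: real
  assumes distrU: "\<And>i. i \<ge> 1 \<Longrightarrow> distr M lborel (U i) = uniform_measure lborel {0..1}"
    and measU: "\<And>i. i \<ge> 1 \<Longrightarrow> U i \<in> borel_measurable M"
    and indepU: "indep_vars (\<lambda>_. borel) U {1..}"
    and tpos: "0 < t" and tlt1: "t < 1"
begin

definition uc :: "'a \<Rightarrow> nat \<Rightarrow> real" where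
  "uc \<omega> j = (if j = 0 then 0 else cl (U j \<omega>))"

abbreviation F :: "nat \<Rightarrow> 'a measure" where "F k \<equiv> gen_filtr M U k"

definition G :: "nat \<Rightarrow> 'a set set" where
  "G k = {U i -` A \<inter> space M | i A. i \<in> {1..k} \<and> A \<in> sets borel}"

lemma G_sub: "G k \<subseteq> Pow (space M)" unfolding G_def by auto

lemma G_events: "G k \<subseteq> sets M"
  unfolding G_def using measU by auto

lemma space_F[simp]: "space (F k) = space M"
  unfolding gen_filtr_def by (simp add: space_measure_of_conv)

lemma sets_F: "sets (F k) = sigma_sets (space M) (G k)"
  unfolding gen_filtr_def G_def[symmetric] using G_sub by (simp add: sets_measure_of)

lemma sets_F_sub: "sets (F k) \<subseteq> sets M"
  unfolding sets_F using G_events by (rule sets.sigma_sets_subset)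

lemma subalg: "subalgebra M (F k)"
  unfolding subalgebra_def using sets_F_sub by simp

lemma F_mono: assumes "n \<le> k" shows "sets (F n) \<subseteq> sets (F k)"
proof -
  have "G n \<subseteq> G k" unfolding G_def using assms by force
  then show ?thesis unfolding sets_F by (rule sigma_sets_mono')
qed

lemma U_meas_F: assumes "1 \<le> i" "i \<le> k" shows "U i \<in> borel_measurable (F k)"
proof (rule measurableI)
  fix A :: "real set" assume "A \<in> sets borel"
  then have "U i -` A \<inter> space M \<in> G k" unfolding G_def using assms by auto
  then show "U i -` A \<inter> space (F k) \<in> sets (F k)" unfolding sets_F by auto
qed auto

lemma uc_meas_F: assumes "j < k" shows "(\<lambda>\<omega>. uc \<omega> (Suc j)) \<in> borel_measurable (F k)"
proof -
  have [measurable]: "U (Suc j) \<in> borel_measurable (F k)" using assms by (intro U_meas_F) auto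
  show ?thesis unfolding uc_def by simp
qed

lemma uc_meas: "(\<lambda>\<omega>. uc \<omega> (Suc j)) \<in> borel_measurable M"
proof -
  have [measurable]: "U (Suc j) \<in> borel_measurable M" using measU by simp
  show ?thesis unfolding uc_def by simp
qed

lemma uc_unit: "unit_seq (uc \<omega>)"
  unfolding unit_seq_def uc_def cl_def by auto

lemma Yk_meas_F: "n \<le> k \<Longrightarrow> (\<lambda>\<omega>. Yk t (uc \<omega>) n) \<in> borel_measurable (F k)"
  by (rule Yk_meas) (rule uc_meas_F; simp)

lemma Yk_meas_M: "(\<lambda>\<omega>. Yk t (uc \<omega>) n) \<in> borel_measurable M"
  by (rule Yk_meas) (rule uc_meas)

lemma kM_meas_F: "n \<le> k \<Longrightarrow> (\<lambda>\<omega>. kak_M (uc \<omega>) n) \<in> borel_measurable (F k)"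
  by (rule kM_meas) (rule uc_meas_F; simp)

lemma kM_meas_M: "(\<lambda>\<omega>. kak_M (uc \<omega>) n) \<in> borel_measurable M"
  by (rule kM_meas) (rule uc_meas)

lemma Yk_int: "integrable M (\<lambda>\<omega>. Yk t (uc \<omega>) n)"
  by (rule integrable_const_bound[where B="real n + 2 / t"])
     (use Yk_bound[OF uc_unit tpos] Yk_meas_M in auto)

end

context kak begin

abbreviation E :: "nat \<Rightarrow> 'a set set" where
  "E i \<equiv> {U i -` A \<inter> space M | A. A \<in> sets borel}"

lemma indep_F: "indep_set (sets (F k)) (sigma_sets (space M) (E (Suc k)))"
proof -
  define I where "I = (\<lambda>b::bool. if b then {1..k} else {Suc k})"
  have E1: "indep_sets E {1..}" using indepU unfolding indep_vars_def2 by auto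
  have E2: "indep_sets E (\<Union>b\<in>UNIV. I b)"
    by (rule indep_sets_mono_index[OF _ E1]) (auto simp: I_def)
  have "indep_sets (\<lambda>b. sigma_sets (space M) (\<Union>i\<in>I b. E i)) UNIV"
  proof (rule indep_sets_collect_sigma[OF E2])
    fix i :: nat and j :: bool
    show "Int_stable (E i)"
      apply (auto simp: Int_stable_def)
      apply (rule_tac x="A \<inter> Aa" in exI)
      apply auto
      done
  next
    show "disjoint_family_on I UNIV"
      unfolding disjoint_family_on_def I_def by auto
  qed
  moreover have "(\<lambda>b. sigma_sets (space M) (\<Union>i\<in>I b. E i)) = case_bool (sets (F k)) (sigma_sets (space M) (E (Suc k)))"
  proof (rule ext)
    fix b :: bool
    have "(\<Union>i\<in>{1..k}. E i) = G k" unfolding G_def by blast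
    then show "sigma_sets (space M) (\<Union>i\<in>I b. E i) = case_bool (sets (F k)) (sigma_sets (space M) (E (Suc k))) b"
      by (cases b) (auto simp: I_def sets_F)
  qed
  ultimately show ?thesis unfolding indep_set_def by simp
qed

lemma indep_W:
  assumes W: "W \<in> borel_measurable (F k)"
  shows "indep_var borel W borel (U (Suc k))"
proof -
  have WM: "W \<in> borel_measurable M" using measurable_from_subalg[OF subalg W] .
  have UM: "U (Suc k) \<in> borel_measurable M" using measU by simp
  have sub: "sigma_sets (space M) {W -` A \<inter> space M | A. A \<in> sets borel} \<subseteq> sets (F k)"
  proof -
    have "{W -` A \<inter> space M | A. A \<in> sets borel} \<subseteq> sets (F k)"
      using measurable_sets[OF W] by auto
    then have "sigma_sets (space (F k)) {W -` A \<inter> space M | A. A \<in> sets borel} \<subseteq> sets (F k)"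
      by (rule sets.sigma_sets_subset)
    then show ?thesis by simp
  qed
  have "indep_set (sigma_sets (space M) {W -` A \<inter> space M | A. A \<in> sets borel}) (sigma_sets (space M) (E (Suc k)))"
    using indep_F[of k] unfolding indep_set_def
    by (rule indep_sets_mono_sets) (use sub in \<open>auto split: bool.split\<close>)
  then show ?thesis unfolding indep_var_eq using WM UM by simp
qed

lemma distr_borel_U: "distr M borel (U (Suc k)) = uniform_measure lborel {0..1}"
proof -
  have "distr M borel (U (Suc k)) = distr M lborel (U (Suc k))"
    by (rule distr_cong) auto
  then show ?thesis using distrU[of "Suc k"] by simp
qed

end

lemma psi_meas[measurable]: "(\<lambda>(x, v). psi t x v) \<in> borel_measurable (borel \<Otimes>\<^sub>M borel)"
  unfolding psi_def by measurable

lemma psi_bound: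
  assumes "0 < t" "0 \<le> x" "x \<le> 1" "0 \<le> v" "v \<le> 1"
  shows "\<bar>psi t x v\<bar> \<le> 1 + 6 / t"
proof -
  have a: "v * x \<le> 1" "(1 - v) * x \<le> 1"
    using assms by (auto intro: mult_le_one)
  have "0 \<le> kf t (v * x)" "kf t (v * x) \<le> 2 / t"
    "0 \<le> kf t ((1 - v) * x)" "kf t ((1 - v) * x) \<le> 2 / t"
    "0 \<le> kf t x" "kf t x \<le> 2 / t"
    using kf_nonneg[OF assms(1)] kf_le1[OF assms(1)] a assms by auto
  then show ?thesis unfolding psi_def by (auto simp: abs_le_iff)
qed

context kak begin

lemma step_int:
  assumes A: "A \<in> sets (F k)"
  shows "(\<integral>\<omega>. indicator A \<omega> * (Yk t (uc \<omega>) (Suc k) - Yk t (uc \<omega>) k) \<partial>M) = 0"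
proof -
  define W where "W \<omega> = indicator A \<omega> * (if t < kak_M (uc \<omega>) k then kak_M (uc \<omega>) k else 0)" for \<omega>
  define g where "g = (\<lambda>(x, v). if t < x \<and> x \<le> 1 then psi t x (cl v) else 0)"
  have [measurable]: "(\<lambda>\<omega>. kak_M (uc \<omega>) k) \<in> borel_measurable (F k)" by (rule kM_meas_F) simp
  have [measurable]: "A \<in> sets (F k)" by (rule A)
  have Wm: "W \<in> borel_measurable (F k)" unfolding W_def by measurable
  have gm: "g \<in> borel_measurable (borel \<Otimes>\<^sub>M borel)"
  proof -
    have [measurable]: "(\<lambda>(x, v). psi t x (cl v)) \<in> borel_measurable (borel \<Otimes>\<^sub>M borel)"
      using measurable_compose[OF _ psi_meas, of "\<lambda>(x, v). (x, cl v)" "borel \<Otimes>\<^sub>M borel" t]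
      by (simp add: case_prod_beta) measurable
    show ?thesis unfolding g_def by measurable
  qed
  have gb: "\<bar>g (x, v)\<bar> \<le> 1 + 6 / t" for x v
    unfolding g_def using psi_bound[OF tpos, of x "cl v"] tpos by (auto simp: cl_def)
  have g0: "(LBINT v. g (x, v) * indicator {0..1} v) = 0" for x
  proof (cases "t < x \<and> x \<le> 1")
    case True
    have "(LBINT v. g (x, v) * indicator {0..1} v) = (LBINT v. psi t x v * indicator {0..1} v)"
      using True by (intro Bochner_Integration.integral_cong refl) (auto simp: g_def cl_def indicator_def)
    also have "\<dots> = 0" using psi_int(2)[OF tpos] True by simp
    finally show ?thesis .
  next
    case False
    then have "(\<lambda>v. g (x, v) * indicator {0..1} v) = (\<lambda>v. 0)" by (auto simp: g_def)
    then show ?thesis by simp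
  qed
  have "(\<integral>\<omega>. g (W \<omega>, U (Suc k) \<omega>) \<partial>M) = 0"
    by (rule freeze[OF prob_space_axioms indep_W[OF Wm] distr_borel_U gm gb g0])
  moreover have "indicator A \<omega> * (Yk t (uc \<omega>) (Suc k) - Yk t (uc \<omega>) k) = g (W \<omega>, U (Suc k) \<omega>)" for \<omega>
  proof -
    have "kak_M (uc \<omega>) k \<le> 1" by (rule kM_le1[OF uc_unit])
    then show ?thesis
      unfolding Y_step[OF uc_unit] W_def g_def using tpos
      by (auto simp: indicator_def uc_def)
  qed
  ultimately show ?thesis by simp
qed

lemma int_Y_eq:
  assumes A: "A \<in> sets (F n)" and nk: "n \<le> k"
  shows "(\<integral>\<omega>. indicator A \<omega> * Yk t (uc \<omega>) k \<partial>M) = (\<integral>\<omega>. indicator A \<omega> * Yk t (uc \<omega>) n \<partial>M)"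
  using nk
proof (induction k)
  case 0 then show ?case by simp
next
  case (Suc k)
  show ?case
  proof (cases "n = Suc k")
    case True then show ?thesis by simp
  next
    case False
    then have nk': "n \<le> k" using Suc by simp
    have AM: "A \<in> sets M" using A sets_F_sub by blast
    have AF: "A \<in> sets (F k)" using A F_mono[OF nk'] by blast
    have i1: "integrable M (\<lambda>\<omega>. indicator A \<omega> * Yk t (uc \<omega>) (Suc k))"
      using integrable_mult_indicator[OF AM Yk_int] by simp
    have i2: "integrable M (\<lambda>\<omega>. indicator A \<omega> * Yk t (uc \<omega>) k)"
      using integrable_mult_indicator[OF AM Yk_int] by simp
    have "(\<integral>\<omega>. indicator A \<omega> * Yk t (uc \<omega>) (Suc k) \<partial>M) - (\<integral>\<omega>. indicator A \<omega> * Yk t (uc \<omega>) k \<partial>M)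
        = (\<integral>\<omega>. indicator A \<omega> * (Yk t (uc \<omega>) (Suc k) - Yk t (uc \<omega>) k) \<partial>M)"
      using i1 i2 by (simp add: right_diff_distrib)
    also have "\<dots> = 0" by (rule step_int[OF AF])
    finally show ?thesis using Suc.IH[OF nk'] by simp
  qed
qed

end

context kak begin

lemma Ck_meas_M: "(\<lambda>\<omega>. Ck t (uc \<omega>) n) \<in> borel_measurable M"
  by (rule Ck_meas) (rule uc_meas)

lemma Sk_meas_M: "(\<lambda>\<omega>. Sk t (uc \<omega>) n) \<in> borel_measurable M"
  by (rule Sk_meas) (rule uc_meas)

lemma Ck_int: "integrable M (\<lambda>\<omega>. Ck t (uc \<omega>) n)"
  by (rule integrable_const_bound[where B="real n"])
     (use Ck_nonneg Ck_le Ck_meas_M in auto)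

lemma Sk_int: "integrable M (\<lambda>\<omega>. Sk t (uc \<omega>) n)"
  by (rule integrable_const_bound[where B="2 / t"])
     (use Sk_nonneg[OF tpos] Sk_le[OF uc_unit tpos] Sk_meas_M in auto)

lemma Nc_meas: "(\<lambda>\<omega>. real (kak_N (uc \<omega>) t)) \<in> borel_measurable M"
proof -
  have [measurable]: "(\<lambda>\<omega>. kak_M (uc \<omega>) k) \<in> borel_measurable M" for k by (rule kM_meas_M)
  have "(\<lambda>\<omega>. kak_N (uc \<omega>) t) \<in> measurable M (count_space UNIV)"
    unfolding kak_N_def by (rule measurable_Least) measurable
  then show ?thesis by measurable
qed

lemma Y0: "Yk t u 0 = 2 / t - 1"
  unfolding Yk_def Ck_def Sk_def kf_def using tlt1 by simp

lemma EY: "(\<integral>\<omega>. Yk t (uc \<omega>) k \<partial>M) = 2 / t - 1"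
proof -
  have "(\<integral>\<omega>. indicator (space M) \<omega> * Yk t (uc \<omega>) k \<partial>M) = (\<integral>\<omega>. indicator (space M) \<omega> * Yk t (uc \<omega>) 0 \<partial>M)"
    by (rule int_Y_eq) (use sets.top[of "F 0"] in simp_all)
  moreover have "(\<integral>\<omega>. indicator (space M) \<omega> * Yk t (uc \<omega>) k \<partial>M) = (\<integral>\<omega>. Yk t (uc \<omega>) k \<partial>M)" for k
    by (rule Bochner_Integration.integral_cong) auto
  ultimately show ?thesis by (simp add: Y0 prob_space)
qed

lemma AE_fin: "AE \<omega> in M. kfin (uc \<omega>) t"
proof -
  define B where "B = {\<omega> \<in> space M. \<not> kfin (uc \<omega>) t}"
  have [measurable]: "(\<lambda>\<omega>. kak_M (uc \<omega>) k) \<in> borel_measurable M" for k by (rule kM_meas_M)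
  have BM: "B \<in> sets M" unfolding B_def kfin_def by measurable
  have bnd: "real k * prob B \<le> 2 / t - 1" for k
  proof -
    have "real k * prob B = (\<integral>\<omega>. real k * indicator B \<omega> \<partial>M)"
      using BM by simp
    also have "\<dots> \<le> (\<integral>\<omega>. Yk t (uc \<omega>) k \<partial>M)"
    proof (rule integral_mono)
      show "integrable M (\<lambda>\<omega>. real k * indicator B \<omega>)"
        using integrable_mult_indicator[OF BM integrable_const[of "real k"]] by (simp add: mult.commute)
      show "integrable M (\<lambda>\<omega>. Yk t (uc \<omega>) k)" by (rule Yk_int)
      fix \<omega> assume "\<omega> \<in> space M"
      show "real k * indicator B \<omega> \<le> Yk t (uc \<omega>) k"
      proof (cases "\<omega> \<in> B")
        case True
        then have "Ck t (uc \<omega>) k = real k" unfolding B_def by (intro Ck_nfin) auto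
        then show ?thesis using True Sk_nonneg[OF tpos, of "uc \<omega>" k] unfolding Yk_def by simp
      next
        case False then show ?thesis using Yk_bound[OF uc_unit tpos] by simp
      qed
    qed
    also have "\<dots> = 2 / t - 1" by (rule EY)
    finally show ?thesis .
  qed
  have "prob B = 0"
  proof (rule ccontr)
    assume "prob B \<noteq> 0"
    then have p: "0 < prob B" using measure_nonneg[of M B] by linarith
    obtain k :: nat where "(2 / t - 1) / prob B < real k" using reals_Archimedean2 by blast
    then have "2 / t - 1 < real k * prob B" using p by (simp add: field_simps)
    with bnd[of k] show False by simp
  qed
  then have "emeasure M B = 0" by (simp add: emeasure_eq_measure)
  then show ?thesis using AE_iff_measurable[OF BM] B_def by auto
qed

lemma int_N_eq:
  assumes A: "A \<in> sets (F n)"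
  shows "integrable M (\<lambda>\<omega>. indicator A \<omega> * real (kak_N (uc \<omega>) t))"
    "(\<integral>\<omega>. indicator A \<omega> * real (kak_N (uc \<omega>) t) \<partial>M) = (\<integral>\<omega>. indicator A \<omega> * Yk t (uc \<omega>) n \<partial>M)"
proof -
  have AM[measurable]: "A \<in> sets M" using A sets_F_sub by blast
  define T where "T = (\<integral>\<omega>. indicator A \<omega> * Yk t (uc \<omega>) n \<partial>M)"
  define fC where "fC k \<omega> = indicator A \<omega> * Ck t (uc \<omega>) k" for k \<omega>
  define fS where "fS k \<omega> = indicator A \<omega> * Sk t (uc \<omega>) k" for k \<omega>
  have iC: "integrable M (fC k)" for k unfolding fC_def using integrable_mult_indicator[OF AM Ck_int] by simp
  have iS: "integrable M (fS k)" for k unfolding fS_def using integrable_mult_indicator[OF AM Sk_int] by simp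
  have sumCS: "integral\<^sup>L M (fC k) + integral\<^sup>L M (fS k) = T" if "n \<le> k" for k
  proof -
    have "integral\<^sup>L M (fC k) + integral\<^sup>L M (fS k) = (\<integral>\<omega>. fC k \<omega> + fS k \<omega> \<partial>M)"
      using iC iS by simp
    also have "\<dots> = (\<integral>\<omega>. indicator A \<omega> * Yk t (uc \<omega>) k \<partial>M)"
      unfolding fC_def fS_def Yk_def by (simp add: distrib_left)
    also have "\<dots> = T" unfolding T_def by (rule int_Y_eq[OF A that])
    finally show ?thesis .
  qed
  have limS: "(\<lambda>k. integral\<^sup>L M (fS k)) \<longlonglongrightarrow> integral\<^sup>L M (\<lambda>\<omega>. 0)"
  proof (rule integral_dominated_convergence[where w="\<lambda>\<omega>. 2 / t"])
    show "(\<lambda>\<omega>. 0::real) \<in> borel_measurable M" by simp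
    show "fS k \<in> borel_measurable M" for k using iC iS by auto
    show "integrable M (\<lambda>\<omega>. 2 / t)" by simp
    show "AE \<omega> in M. (\<lambda>k. fS k \<omega>) \<longlonglongrightarrow> 0"
      using AE_fin
    proof eventually_elim
      case (elim \<omega>)
      have "eventually (\<lambda>k. 0 = fS k \<omega>) sequentially"
        using eventually_ge_at_top[of "kak_N (uc \<omega>) t"]
        by eventually_elim (simp add: fS_def Sk_fin[OF uc_unit elim])
      then show ?case by (rule Lim_transform_eventually[OF tendsto_const])
    qed
    show "AE \<omega> in M. norm (fS k \<omega>) \<le> 2 / t" for k
      using Sk_nonneg[OF tpos] Sk_le[OF uc_unit tpos] tpos unfolding fS_def
      by (auto simp: indicator_def)
  qed
  have limC: "(\<lambda>k. integral\<^sup>L M (fC k)) \<longlonglongrightarrow> T"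
  proof -
    have L: "(\<lambda>k. T - integral\<^sup>L M (fS k)) \<longlonglongrightarrow> T - 0"
      using limS by (intro tendsto_diff tendsto_const) simp
    have eqCS: "T - integral\<^sup>L M (fS k) = integral\<^sup>L M (fC k)" if "n \<le> k" for k
      using sumCS[OF that] by (metis add_diff_cancel_right')
    have ev: "eventually (\<lambda>k. T - integral\<^sup>L M (fS k) = integral\<^sup>L M (fC k)) sequentially"
      using eventually_ge_at_top[of n] by (rule eventually_mono) (rule eqCS)
    from Lim_transform_eventually[OF L ev] show ?thesis by simp
  qed
  have h1: "integrable M (fC i)" for i by (rule iC)
  have h2: "AE \<omega> in M. mono (\<lambda>k. fC k \<omega>)"
  proof (intro AE_I2 monoI)
    fix \<omega> and i j :: nat assume "i \<le> j"
    then have "Ck t (uc \<omega>) i \<le> Ck t (uc \<omega>) j"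
      unfolding Ck_def by (intro sum_mono2) auto
    then show "fC i \<omega> \<le> fC j \<omega>" unfolding fC_def by (auto simp: indicator_def)
  qed
  have h3: "AE \<omega> in M. 0 \<le> fC i \<omega>" for i unfolding fC_def using Ck_nonneg by auto
  have h4: "AE \<omega> in M. (\<lambda>k. fC k \<omega>) \<longlonglongrightarrow> indicator A \<omega> * real (kak_N (uc \<omega>) t)"
    using AE_fin
  proof eventually_elim
    case (elim \<omega>)
    have "eventually (\<lambda>k. indicator A \<omega> * real (kak_N (uc \<omega>) t) = fC k \<omega>) sequentially"
      using eventually_ge_at_top[of "kak_N (uc \<omega>) t"]
      by eventually_elim (simp add: fC_def Ck_fin[OF uc_unit elim])
    then show ?case by (rule Lim_transform_eventually[OF tendsto_const])
  qed
  have h5: "(\<lambda>k. integral\<^sup>L M (fC k)) \<longlonglongrightarrow> T" by (rule limC)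
  have h6: "(\<lambda>\<omega>. indicator A \<omega> * real (kak_N (uc \<omega>) t)) \<in> borel_measurable M"
    using Nc_meas by measurable
  have mc: "integrable M (\<lambda>\<omega>. indicator A \<omega> * real (kak_N (uc \<omega>) t)) \<and>
      integral\<^sup>L M (\<lambda>\<omega>. indicator A \<omega> * real (kak_N (uc \<omega>) t)) = T"
    using integral_monotone_convergence_nonneg[where f=fC, OF h1 h2 h3 h4 h5 h6] by blast
  then show "integrable M (\<lambda>\<omega>. indicator A \<omega> * real (kak_N (uc \<omega>) t))"
    "(\<integral>\<omega>. indicator A \<omega> * real (kak_N (uc \<omega>) t) \<partial>M) = (\<integral>\<omega>. indicator A \<omega> * Yk t (uc \<omega>) n \<partial>M)"
    unfolding T_def by auto
qed

end

context kak begin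

lemma AE_good: "AE \<omega> in M. \<forall>j. 0 < U (Suc j) \<omega> \<and> U (Suc j) \<omega> < 1"
proof (subst AE_all_countable, intro allI)
  fix j
  have UM: "U (Suc j) \<in> measurable M borel" using measU by simp
  have "AE x in lborel. x \<in> {0..1::real} \<longrightarrow> 0 < x \<and> x < 1"
    using AE_lborel_singleton[of 0] AE_lborel_singleton[of 1] by eventually_elim auto
  then have "AE x in uniform_measure lborel {0..1::real}. 0 < x \<and> x < 1"
    by (subst AE_uniform_measure) auto
  then have "AE x in distr M borel (U (Suc j)). 0 < x \<and> x < 1"
    unfolding distr_borel_U .
  then show "AE \<omega> in M. 0 < U (Suc j) \<omega> \<and> U (Suc j) \<omega> < 1"
    by (rule AE_distrD[OF UM])
qed

lemma good_eq:
  assumes "\<forall>j. 0 < U (Suc j) \<omega> \<and> U (Suc j) \<omega> < 1"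
  shows "(\<lambda>n. kak_lengths (uc \<omega>) n) = (\<lambda>n. kak_lengths (\<lambda>i. U i \<omega>) n)"
proof
  fix n
  show "kak_lengths (uc \<omega>) n = kak_lengths (\<lambda>i. U i \<omega>) n"
    by (rule kl_cong) (use assms in \<open>auto simp: uc_def cl_def\<close>)
qed

lemma good_N: "\<forall>j. 0 < U (Suc j) \<omega> \<and> U (Suc j) \<omega> < 1 \<Longrightarrow> kak_N (uc \<omega>) t = kak_N (\<lambda>i. U i \<omega>) t"
proof -
  assume "\<forall>j. 0 < U (Suc j) \<omega> \<and> U (Suc j) \<omega> < 1"
  then have "kak_lengths (uc \<omega>) = kak_lengths (\<lambda>i. U i \<omega>)" using good_eq by simp
  then show ?thesis unfolding kak_N_def kak_M_def by (simp only:)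
qed

lemma good_L: "\<forall>j. 0 < U (Suc j) \<omega> \<and> U (Suc j) \<omega> < 1 \<Longrightarrow> kak_L (uc \<omega>) n i = kak_L (\<lambda>i. U i \<omega>) n i"
proof -
  assume "\<forall>j. 0 < U (Suc j) \<omega> \<and> U (Suc j) \<omega> < 1"
  then have "kak_lengths (uc \<omega>) = kak_lengths (\<lambda>i. U i \<omega>)" using good_eq by simp
  then show ?thesis unfolding kak_L_def by (simp only:)
qed

lemma Nf_meas: "(\<lambda>\<omega>. real (kak_N (\<lambda>i. U i \<omega>) t)) \<in> borel_measurable M"
proof -
  have [measurable]: "(\<lambda>\<omega>. kak_M (\<lambda>i. U i \<omega>) k) \<in> borel_measurable M" for k
    by (rule kM_meas) (use measU in simp)
  have "(\<lambda>\<omega>. kak_N (\<lambda>i. U i \<omega>) t) \<in> measurable M (count_space UNIV)"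
    unfolding kak_N_def by (rule measurable_Least) measurable
  then show ?thesis by measurable
qed

lemma AE_N: "AE \<omega> in M. real (kak_N (\<lambda>i. U i \<omega>) t) = real (kak_N (uc \<omega>) t)"
  using AE_good by eventually_elim (simp add: good_N)

lemma main_ce:
  shows "AE \<omega> in M. real_cond_exp M (F n) (\<lambda>\<omega>. real (kak_N (\<lambda>i. U i \<omega>) t)) \<omega> = Yk t (uc \<omega>) n"
    and "integrable M (\<lambda>\<omega>. real (kak_N (\<lambda>i. U i \<omega>) t))"
    and "expectation (\<lambda>\<omega>. real (kak_N (\<lambda>i. U i \<omega>) t)) = 2 / t - 1"
proof -
  interpret S: sigma_finite_subalgebra M "F n"
    by (rule finite_measure_subalgebra_is_sigma_finite) (unfold_locales, rule subalg)
  have sp: "space M \<in> sets (F n)" using sets.top[of "F n"] by simp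
  have i1: "integrable M (\<lambda>\<omega>. indicator (space M) \<omega> * real (kak_N (uc \<omega>) t))"
    by (rule int_N_eq(1)[OF sp])
  have "integrable M (\<lambda>\<omega>. indicator (space M) \<omega> * real (kak_N (uc \<omega>) t)) \<longleftrightarrow> integrable M (\<lambda>\<omega>. real (kak_N (uc \<omega>) t))"
    by (rule Bochner_Integration.integrable_cong) auto
  then have i2: "integrable M (\<lambda>\<omega>. real (kak_N (uc \<omega>) t))" using i1 by simp
  have "integrable M (\<lambda>\<omega>. real (kak_N (\<lambda>i. U i \<omega>) t)) \<longleftrightarrow> integrable M (\<lambda>\<omega>. real (kak_N (uc \<omega>) t))"
    by (rule integrable_cong_AE) (use AE_N Nc_meas Nf_meas in auto)
  then show iN: "integrable M (\<lambda>\<omega>. real (kak_N (\<lambda>i. U i \<omega>) t))" using i2 by simp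
  have eN: "(\<integral>\<omega>. indicator A \<omega> * real (kak_N (\<lambda>i. U i \<omega>) t) \<partial>M) = (\<integral>\<omega>. indicator A \<omega> * real (kak_N (uc \<omega>) t) \<partial>M)"
    if AM: "A \<in> sets M" for A
  proof (rule integral_cong_AE)
    have [measurable]: "A \<in> sets M" by (rule AM)
    show "(\<lambda>\<omega>. indicator A \<omega> * real (kak_N (\<lambda>i. U i \<omega>) t)) \<in> borel_measurable M"
      using Nf_meas by measurable
    show "(\<lambda>\<omega>. indicator A \<omega> * real (kak_N (uc \<omega>) t)) \<in> borel_measurable M"
      using Nc_meas by measurable
    show "AE \<omega> in M. indicator A \<omega> * real (kak_N (\<lambda>i. U i \<omega>) t) = indicator A \<omega> * real (kak_N (uc \<omega>) t)"
      using AE_N by eventually_elim simp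
  qed
  show "AE \<omega> in M. real_cond_exp M (F n) (\<lambda>\<omega>. real (kak_N (\<lambda>i. U i \<omega>) t)) \<omega> = Yk t (uc \<omega>) n"
  proof (rule S.real_cond_exp_charact)
    fix A assume A: "A \<in> sets (F n)"
    show "(\<integral>\<omega>\<in>A. real (kak_N (\<lambda>i. U i \<omega>) t) \<partial>M) = (\<integral>\<omega>\<in>A. Yk t (uc \<omega>) n \<partial>M)"
      unfolding set_lebesgue_integral_def using eN[of A] A sets_F_sub int_N_eq(2)[OF A] by auto
  next
    show "integrable M (\<lambda>\<omega>. real (kak_N (\<lambda>i. U i \<omega>) t))" by (rule iN)
    show "integrable M (\<lambda>\<omega>. Yk t (uc \<omega>) n)" by (rule Yk_int)
    show "(\<lambda>\<omega>. Yk t (uc \<omega>) n) \<in> borel_measurable (F n)" by (rule Yk_meas_F) simp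
  qed
  have "expectation (\<lambda>\<omega>. real (kak_N (\<lambda>i. U i \<omega>) t)) = (\<integral>\<omega>. indicator (space M) \<omega> * real (kak_N (\<lambda>i. U i \<omega>) t) \<partial>M)"
    by (rule Bochner_Integration.integral_cong) auto
  also have "\<dots> = (\<integral>\<omega>. indicator (space M) \<omega> * Yk t (uc \<omega>) n \<partial>M)"
    using eN[of "space M"] int_N_eq(2)[OF sp] by simp
  also have "\<dots> = (\<integral>\<omega>. Yk t (uc \<omega>) n \<partial>M)"
    by (rule Bochner_Integration.integral_cong) auto
  also have "\<dots> = 2 / t - 1" by (rule EY)
  finally show "expectation (\<lambda>\<omega>. real (kak_N (\<lambda>i. U i \<omega>) t)) = 2 / t - 1" .
qed

lemma main:
  assumes tn: "t < 1 / real (n + 1)"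
  shows "(AE \<omega> in M.
            real_cond_exp M (gen_filtr M U n) (\<lambda>\<omega>. real (kak_N (\<lambda>i. U i \<omega>) t)) \<omega>
              - expectation (\<lambda>\<omega>. real (kak_N (\<lambda>i. U i \<omega>) t))
            = (\<Sum>i = 1..n+1. (1 - 2 * kak_L (\<lambda>i. U i \<omega>) n i / t)
                 * (if kak_L (\<lambda>i. U i \<omega>) n i \<le> t then 1 else 0)))
       \<and> (AE \<omega> in M.
            \<bar>real_cond_exp M (gen_filtr M U n) (\<lambda>\<omega>. real (kak_N (\<lambda>i. U i \<omega>) t)) \<omega>
              - expectation (\<lambda>\<omega>. real (kak_N (\<lambda>i. U i \<omega>) t))\<bar>
            \<le> real (kak_K (\<lambda>i. U i \<omega>) n t))"
proof -
  have tn': "t < 1 / real (Suc n)" using tn by simp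
  have 1: "AE \<omega> in M.
            real_cond_exp M (gen_filtr M U n) (\<lambda>\<omega>. real (kak_N (\<lambda>i. U i \<omega>) t)) \<omega>
              - expectation (\<lambda>\<omega>. real (kak_N (\<lambda>i. U i \<omega>) t))
            = (\<Sum>i = 1..n+1. (1 - 2 * kak_L (\<lambda>i. U i \<omega>) n i / t)
                 * (if kak_L (\<lambda>i. U i \<omega>) n i \<le> t then 1 else 0))"
    using main_ce(1)[of n] AE_good
  proof eventually_elim
    case (elim \<omega>)
    have "real_cond_exp M (gen_filtr M U n) (\<lambda>\<omega>. real (kak_N (\<lambda>i. U i \<omega>) t)) \<omega>
              - expectation (\<lambda>\<omega>. real (kak_N (\<lambda>i. U i \<omega>) t)) = Yk t (uc \<omega>) n - (2 / t - 1)"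
      using elim(1) main_ce(3) by simp
    also have "\<dots> = (\<Sum>i = 1..n+1. (1 - 2 * kak_L (uc \<omega>) n i / t) * (if kak_L (uc \<omega>) n i \<le> t then 1 else 0))"
      by (rule final_formula[OF uc_unit tpos tn'])
    also have "\<dots> = (\<Sum>i = 1..n+1. (1 - 2 * kak_L (\<lambda>i. U i \<omega>) n i / t) * (if kak_L (\<lambda>i. U i \<omega>) n i \<le> t then 1 else 0))"
      using good_L[OF elim(2)] by simp
    finally show ?case .
  qed
  have 2: "AE \<omega> in M.
            \<bar>real_cond_exp M (gen_filtr M U n) (\<lambda>\<omega>. real (kak_N (\<lambda>i. U i \<omega>) t)) \<omega>
              - expectation (\<lambda>\<omega>. real (kak_N (\<lambda>i. U i \<omega>) t))\<bar>
            \<le> real (kak_K (\<lambda>i. U i \<omega>) n t)"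
    using 1 AE_good
  proof eventually_elim
    case (elim \<omega>)
    show ?case unfolding elim(1) by (rule K_bound) (use elim(2) in auto)
  qed
  from 1 2 show ?thesis by blast
qed

end

theorem lemma4p5:
  fixes M :: "'a measure" and U :: "nat \<Rightarrow> 'a \<Rightarrow> real" and n :: nat and t :: real
  assumes "prob_space M"
    and "\<And>i. i \<ge> 1 \<Longrightarrow> distr M lborel (U i) = uniform_measure lborel {0..1}"
    and "\<And>i. i \<ge> 1 \<Longrightarrow> U i \<in> borel_measurable M"
    and "prob_space.indep_vars M (\<lambda>_. borel) U {1..}"
    and "0 < t" and "t < 1 / real (n + 1)"
  shows "(AE \<omega> in M.
            real_cond_exp M (gen_filtr M U n) (\<lambda>\<omega>. real (kak_N (\<lambda>i. U i \<omega>) t)) \<omega>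
              - prob_space.expectation M (\<lambda>\<omega>. real (kak_N (\<lambda>i. U i \<omega>) t))
            = (\<Sum>i = 1..n+1. (1 - 2 * kak_L (\<lambda>i. U i \<omega>) n i / t)
                 * (if kak_L (\<lambda>i. U i \<omega>) n i \<le> t then 1 else 0)))
       \<and> (AE \<omega> in M.
            \<bar>real_cond_exp M (gen_filtr M U n) (\<lambda>\<omega>. real (kak_N (\<lambda>i. U i \<omega>) t)) \<omega>
              - prob_space.expectation M (\<lambda>\<omega>. real (kak_N (\<lambda>i. U i \<omega>) t))\<bar>
            \<le> real (kak_K (\<lambda>i. U i \<omega>) n t))"
proof -
  have t1: "t < 1"
  proof -
    have "1 / real (n + 1) \<le> 1" by simp
    then show ?thesis using assms(6) by linarith
  qed
  have ax: "kak_axioms M U t"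
    by (rule kak_axioms.intro) (fact assms(2), fact assms(3), fact assms(4), fact assms(5), fact t1)
  interpret kak M U t
    by (rule kak.intro[OF assms(1) ax])
  show ?thesis by (rule main[OF assms(6)])
qed

end
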